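(* Let $G=HK$ for two normal subgroups $H$ and $K$ of the finite group $G$, and let $m\ge 2$. If $M(G,H,K)$ is trivial and $H$ has exponent $m-1$, then $d^\wedge_m(H,K)=d(H,K)$.
   Context: All groups are finite; ${}^g x=gxg^{-1}$, $[x,y]=xyx^{-1}y^{-1}$. For normal subgroups $H,K$ of $G$, $H\wedge K$ is the group generated by symbols $h\wedge k$ ($h\in H,k\in K$) subject to $hh'\wedge k=({}^h h'\wedge {}^h k)(h\wedge k)$, $h\wedge kk'=(h\wedge k)({}^k h\wedge {}^k k')$, $y\wedge y=1$ for $y\in H\cap K$; $\kappa':H\wedge K\to[H,K]$, $h\wedge k\mapsto[h,k]$, and $M(G,H,K):=\ker\kappa'$. $d^\wedge_m(H,K)=|\{(h,k)\in H\times K:h^m\wedge k=1\}|/(|H||K|)$ and $d(H,K)=|\{(h,k)\in H\times K:hk=kh\}|/(|H||K|)$. *)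

theory Defs
  imports "HOL-Algebra.Algebra" Complex_Main
begin

definition conjg :: "('a, 'b) monoid_scheme \<Rightarrow> 'a \<Rightarrow> 'a \<Rightarrow> 'a" where
  "conjg G g x = g \<otimes>\<^bsub>G\<^esub> x \<otimes>\<^bsub>G\<^esub> inv\<^bsub>G\<^esub> g"

definition commg :: "('a, 'b) monoid_scheme \<Rightarrow> 'a \<Rightarrow> 'a \<Rightarrow> 'a" where
  "commg G x y = x \<otimes>\<^bsub>G\<^esub> y \<otimes>\<^bsub>G\<^esub> inv\<^bsub>G\<^esub> x \<otimes>\<^bsub>G\<^esub> inv\<^bsub>G\<^esub> y"

definition group_exponent :: "('a, 'b) monoid_scheme \<Rightarrow> 'a set \<Rightarrow> nat" where
  "group_exponent G H = (LEAST n. 0 < n \<and> (\<forall>h\<in>H. h [^]\<^bsub>G\<^esub> n = \<one>\<^bsub>G\<^esub>))"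

text \<open>The nonabelian exterior product H \<and> K as a presented group.
  Words in the generators h\<and>k (h in H, k in K) and their inverses:
  a letter (True,(h,k)) stands for h\<and>k, (False,(h,k)) for its inverse;
  a word stands for the product of its letters from left to right.\<close>

type_synonym 'a ext_word = "(bool \<times> ('a \<times> 'a)) list"

definition ext_words :: "'a set \<Rightarrow> 'a set \<Rightarrow> 'a ext_word set" where
  "ext_words H K = {w. \<forall>l\<in>set w. snd l \<in> H \<times> K}"

inductive ext_eq :: "('a, 'b) monoid_scheme \<Rightarrow> 'a set \<Rightarrow> 'a set \<Rightarrow> 'a ext_word \<Rightarrow> 'a ext_word \<Rightarrow> bool"
  for G H K where
  refl: "w \<in> ext_words H K \<Longrightarrow> ext_eq G H K w w"
| sym: "ext_eq G H K u v \<Longrightarrow> ext_eq G H K v u"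
| trans: "ext_eq G H K u v \<Longrightarrow> ext_eq G H K v w \<Longrightarrow> ext_eq G H K u w"
| cong: "ext_eq G H K u u' \<Longrightarrow> ext_eq G H K v v' \<Longrightarrow> ext_eq G H K (u @ v) (u' @ v')"
| cancel: "h \<in> H \<Longrightarrow> k \<in> K \<Longrightarrow> ext_eq G H K [(b, (h, k)), (\<not> b, (h, k))] []"
| rel1: "h \<in> H \<Longrightarrow> h' \<in> H \<Longrightarrow> k \<in> K \<Longrightarrow>
     ext_eq G H K [(True, (h \<otimes>\<^bsub>G\<^esub> h', k))]
                  [(True, (conjg G h h', conjg G h k)), (True, (h, k))]"
| rel2: "h \<in> H \<Longrightarrow> k \<in> K \<Longrightarrow> k' \<in> K \<Longrightarrow>
     ext_eq G H K [(True, (h, k \<otimes>\<^bsub>G\<^esub> k'))]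
                  [(True, (h, k)), (True, (conjg G k h, conjg G k k'))]"
| rel3: "y \<in> H \<inter> K \<Longrightarrow> ext_eq G H K [(True, (y, y))] []"

definition ext_rel :: "('a, 'b) monoid_scheme \<Rightarrow> 'a set \<Rightarrow> 'a set \<Rightarrow> ('a ext_word \<times> 'a ext_word) set" where
  "ext_rel G H K = {(u, v). ext_eq G H K u v}"

definition ext_rep :: "'a ext_word set \<Rightarrow> 'a ext_word" where
  "ext_rep A = (SOME u. u \<in> A)"

definition ext_prod :: "('a, 'b) monoid_scheme \<Rightarrow> 'a set \<Rightarrow> 'a set \<Rightarrow> 'a ext_word set monoid" where
  "ext_prod G H K =
     \<lparr> carrier = ext_words H K // ext_rel G H K,
       monoid.mult = (\<lambda>A B. ext_rel G H K `` {ext_rep A @ ext_rep B}),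
       one = ext_rel G H K `` {[]} \<rparr>"

definition ext_wedge :: "('a, 'b) monoid_scheme \<Rightarrow> 'a set \<Rightarrow> 'a set \<Rightarrow> 'a \<Rightarrow> 'a \<Rightarrow> 'a ext_word set" where
  "ext_wedge G H K h k = ext_rel G H K `` {[(True, (h, k))]}"

definition word_comm :: "('a, 'b) monoid_scheme \<Rightarrow> 'a ext_word \<Rightarrow> 'a" where
  "word_comm G w = foldr (\<lambda>(b, (h, k)) acc.
       (if b then commg G h k else inv\<^bsub>G\<^esub> (commg G h k)) \<otimes>\<^bsub>G\<^esub> acc) w \<one>\<^bsub>G\<^esub>"

definition kappa' :: "('a, 'b) monoid_scheme \<Rightarrow> 'a ext_word set \<Rightarrow> 'a" where
  "kappa' G A = word_comm G (ext_rep A)"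

definition M_ext :: "('a, 'b) monoid_scheme \<Rightarrow> 'a set \<Rightarrow> 'a set \<Rightarrow> 'a ext_word set set" where
  "M_ext G H K = kernel (ext_prod G H K) G (kappa' G)"

definition d_wedge :: "('a, 'b) monoid_scheme \<Rightarrow> nat \<Rightarrow> 'a set \<Rightarrow> 'a set \<Rightarrow> real" where
  "d_wedge G m H K =
     real (card {(h, k) \<in> H \<times> K. ext_wedge G H K (h [^]\<^bsub>G\<^esub> m) k = \<one>\<^bsub>ext_prod G H K\<^esub>})
     / (real (card H) * real (card K))"

definition d_comm :: "('a, 'b) monoid_scheme \<Rightarrow> 'a set \<Rightarrow> 'a set \<Rightarrow> real" where
  "d_comm G H K =
     real (card {(h, k) \<in> H \<times> K. h \<otimes>\<^bsub>G\<^esub> k = k \<otimes>\<^bsub>G\<^esub> h})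
     / (real (card H) * real (card K))"

end

theory Submission
  imports Defs
begin

definition okw :: "('a, 'b) monoid_scheme \<Rightarrow> 'a ext_word \<Rightarrow> bool" where
  "okw G w = (\<forall>l\<in>set w. fst (snd l) \<in> carrier G \<and> snd (snd l) \<in> carrier G)"

lemma (in group) cancel1: "x \<in> carrier G \<Longrightarrow> y \<in> carrier G \<Longrightarrow> inv x \<otimes> (x \<otimes> y) = y"
  by (simp add: m_assoc[symmetric])
lemma (in group) cancel2: "x \<in> carrier G \<Longrightarrow> y \<in> carrier G \<Longrightarrow> x \<otimes> (inv x \<otimes> y) = y"
  by (simp add: m_assoc[symmetric])

lemma (in group) word_comm_carrier: "okw G w \<Longrightarrow> word_comm G w \<in> carrier G"
  by (induction w) (auto simp: word_comm_def okw_def commg_def)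

lemma (in group) word_comm_append:
  "okw G u \<Longrightarrow> okw G v \<Longrightarrow> word_comm G (u @ v) = word_comm G u \<otimes> word_comm G v"
proof (induction u)
  case Nil
  then show ?case using word_comm_carrier[of v] by (simp add: word_comm_def)
next
  case (Cons a u)
  then have "okw G u" by (simp add: okw_def)
  with Cons have IH: "word_comm G (u @ v) = word_comm G u \<otimes> word_comm G v" by simp
  obtain b h k where a: "a = (b,(h,k))" by (cases a) auto
  have hk: "h \<in> carrier G" "k \<in> carrier G" using Cons.prems a by (auto simp: okw_def)
  have "word_comm G ((a#u) @ v) = (if b then commg G h k else inv (commg G h k)) \<otimes> word_comm G (u @ v)"
    by (simp add: word_comm_def a)
  also have "\<dots> = ((if b then commg G h k else inv (commg G h k)) \<otimes> word_comm G u) \<otimes> word_comm G v"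
    using IH hk `okw G u` Cons.prems
    by (simp add: m_assoc word_comm_carrier commg_def)
  also have "\<dots> = word_comm G (a#u) \<otimes> word_comm G v"
    by (simp add: word_comm_def a)
  finally show ?case .
qed

lemma (in group) ext_eq_comm:
  assumes "H \<subseteq> carrier G" "K \<subseteq> carrier G"
  shows "ext_eq G H K u v \<Longrightarrow> okw G u \<and> okw G v \<and> word_comm G u = word_comm G v"
proof (induction rule: ext_eq.induct)
  case (refl w)
  then show ?case using assms by (force simp: ext_words_def okw_def)
next
  case (sym u v)
  then show ?case by auto
next
  case (trans u v w)
  then show ?case by auto
next
  case (cong u u' v v')
  then show ?case by (auto simp: okw_def word_comm_append)
next
  case (cancel h k b)
  then have "h \<in> carrier G" "k \<in> carrier G" using assms by auto
  then show ?case by (cases b) (auto simp: okw_def word_comm_def commg_def)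
next
  case (rel1 h h' k)
  then have c: "h \<in> carrier G" "h' \<in> carrier G" "k \<in> carrier G" using assms by auto
  then show ?case
    by (simp add: okw_def word_comm_def commg_def conjg_def m_assoc inv_mult_group cancel1 cancel2)
next
  case (rel2 h k k')
  then have c: "h \<in> carrier G" "k \<in> carrier G" "k' \<in> carrier G" using assms by auto
  then show ?case
    by (simp add: okw_def word_comm_def commg_def conjg_def m_assoc inv_mult_group cancel1 cancel2)
next
  case (rel3 y)
  then have "y \<in> carrier G" using assms by auto
  then show ?case by (simp add: okw_def word_comm_def commg_def m_assoc cancel1 cancel2)
qed

lemma (in group) comm_iff:
  assumes x: "x \<in> carrier G" and y: "y \<in> carrier G"
  shows "x \<otimes> y \<otimes> inv x \<otimes> inv y = \<one> \<longleftrightarrow> x \<otimes> y = y \<otimes> x"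
proof
  have e: "x \<otimes> y \<otimes> inv x \<otimes> inv y \<otimes> (y \<otimes> x) = x \<otimes> y"
    using x y by (simp add: m_assoc cancel1)
  assume "x \<otimes> y \<otimes> inv x \<otimes> inv y = \<one>"
  then show "x \<otimes> y = y \<otimes> x" using e x y by simp
next
  assume a: "x \<otimes> y = y \<otimes> x"
  have "x \<otimes> y \<otimes> inv x \<otimes> inv y = y \<otimes> x \<otimes> inv x \<otimes> inv y" by (simp only: a)
  also have "\<dots> = \<one>" using x y by (simp add: m_assoc)
  finally show "x \<otimes> y \<otimes> inv x \<otimes> inv y = \<one>" .
qed

lemma wedge_iff:
  assumes G: "group G" and HK: "H \<subseteq> carrier G" "K \<subseteq> carrier G"
    and h: "h \<in> H" and k: "k \<in> K"
    and M: "M_ext G H K = {\<one>\<^bsub>ext_prod G H K\<^esub>}"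
  shows "ext_wedge G H K h k = \<one>\<^bsub>ext_prod G H K\<^esub> \<longleftrightarrow> h \<otimes>\<^bsub>G\<^esub> k = k \<otimes>\<^bsub>G\<^esub> h"
proof -
  interpret group G by fact
  have hc: "h \<in> carrier G" "k \<in> carrier G" using HK h k by auto
  have comm: "commg G h k = \<one>\<^bsub>G\<^esub> \<longleftrightarrow> h \<otimes>\<^bsub>G\<^esub> k = k \<otimes>\<^bsub>G\<^esub> h"
    unfolding commg_def using comm_iff[OF hc] .
  have w: "[(True, (h, k))] \<in> ext_words H K" using h k by (simp add: ext_words_def)
  have self: "[(True, (h, k))] \<in> ext_wedge G H K h k"
    unfolding ext_wedge_def ext_rel_def using ext_eq.refl[OF w] by simp
  have wc: "word_comm G [(True, (h, k))] = commg G h k"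
    using hc by (simp add: word_comm_def commg_def)
  show ?thesis
  proof
    assume eq: "ext_wedge G H K h k = \<one>\<^bsub>ext_prod G H K\<^esub>"
    then have "ext_eq G H K [] [(True, (h, k))]" using self
      by (simp add: ext_prod_def ext_rel_def)
    then have "word_comm G [] = word_comm G [(True, (h, k))]"
      using ext_eq_comm[OF HK] by blast
    then show "h \<otimes>\<^bsub>G\<^esub> k = k \<otimes>\<^bsub>G\<^esub> h" using wc comm by (simp add: word_comm_def)
  next
    assume "h \<otimes>\<^bsub>G\<^esub> k = k \<otimes>\<^bsub>G\<^esub> h"
    then have c1: "commg G h k = \<one>\<^bsub>G\<^esub>" using comm by simp
    have car: "ext_wedge G H K h k \<in> carrier (ext_prod G H K)"
      unfolding ext_prod_def ext_wedge_def using w by (simp add: quotientI)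
    have "ext_rep (ext_wedge G H K h k) \<in> ext_wedge G H K h k"
      unfolding ext_rep_def using self by (rule someI)
    then have "ext_eq G H K [(True, (h, k))] (ext_rep (ext_wedge G H K h k))"
      by (simp add: ext_wedge_def ext_rel_def)
    then have "kappa' G (ext_wedge G H K h k) = \<one>\<^bsub>G\<^esub>"
      using ext_eq_comm[OF HK] wc c1 by (simp add: kappa'_def)
    then have "ext_wedge G H K h k \<in> M_ext G H K"
      using car by (simp add: M_ext_def kernel_def)
    then show "ext_wedge G H K h k = \<one>\<^bsub>ext_prod G H K\<^esub>" using M by simp
  qed
qed

theorem mainTheorem8:
  fixes G :: "('a, 'b) monoid_scheme" and H K :: "'a set" and m :: nat
  assumes "group G" and "finite (carrier G)"
    and "H \<lhd> G" and "K \<lhd> G"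
    and "H <#>\<^bsub>G\<^esub> K = carrier G"
    and "m \<ge> 2"
    and "M_ext G H K = {\<one>\<^bsub>ext_prod G H K\<^esub>}"
    and "group_exponent G H = m - 1"
  shows "d_wedge G m H K = d_comm G H K"
proof -
  interpret group G by fact
  have HK: "H \<subseteq> carrier G" "K \<subseteq> carrier G"
    using assms(3,4) by (auto dest: normal_imp_subgroup subgroup.subset)
  have o: "0 < order G" using assms(2) order_gt_0_iff_finite by blast
  have o1: "\<forall>h\<in>H. h [^]\<^bsub>G\<^esub> order G = \<one>\<^bsub>G\<^esub>" using HK pow_order_eq_1 by blast
  have ex: "\<exists>n::nat. 0 < n \<and> (\<forall>h\<in>H. h [^]\<^bsub>G\<^esub> n = \<one>\<^bsub>G\<^esub>)"
    using o o1 by blast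
  have ex1: "\<forall>h\<in>H. h [^]\<^bsub>G\<^esub> (m - 1) = \<one>\<^bsub>G\<^esub>"
    using LeastI_ex[OF ex] assms(8) unfolding group_exponent_def by simp
  obtain j where mj: "m = Suc j" using assms(6) by (cases m) auto
  have pw: "h [^]\<^bsub>G\<^esub> m = h" if "h \<in> H" for h
  proof -
    have hc: "h \<in> carrier G" using that HK by blast
    have "h [^]\<^bsub>G\<^esub> m = h [^]\<^bsub>G\<^esub> j \<otimes>\<^bsub>G\<^esub> h"
      unfolding mj by (rule nat_pow_Suc)
    also have "h [^]\<^bsub>G\<^esub> j = \<one>\<^bsub>G\<^esub>" using ex1 that mj by simp
    finally show ?thesis using hc by simp
  qed
  have "{(h, k) \<in> H \<times> K. ext_wedge G H K (h [^]\<^bsub>G\<^esub> m) k = \<one>\<^bsub>ext_prod G H K\<^esub>}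
      = {(h, k) \<in> H \<times> K. h \<otimes>\<^bsub>G\<^esub> k = k \<otimes>\<^bsub>G\<^esub> h}"
  proof (rule Collect_cong, clarify)
    fix h k
    show "((h, k) \<in> H \<times> K \<and> ext_wedge G H K (h [^]\<^bsub>G\<^esub> m) k = \<one>\<^bsub>ext_prod G H K\<^esub>) =
          ((h, k) \<in> H \<times> K \<and> h \<otimes>\<^bsub>G\<^esub> k = k \<otimes>\<^bsub>G\<^esub> h)"
    proof (cases "h \<in> H \<and> k \<in> K")
      case True
      then show ?thesis using wedge_iff[OF assms(1) HK _ _ assms(7), of h k] pw[of h] by simp
    next
      case False
      then show ?thesis by blast
    qed
  qed
  then show ?thesis unfolding d_wedge_def d_comm_def by simp
qed

end
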